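(* Let $a=(a_i)_{i\in\mathbb Z}$ be any sequence of complex numbers and let $\mu=(p_1,\dots,p_d\mid q_1,\dots,q_d)$ be a Young diagram in Frobenius notation. Then $s_{\mu;a}=\det[s_{(p_i\mid q_j);a}]_{i,j=1}^d$ (Giambelli formula), where $(p\mid q)$ denotes the hook diagram with Frobenius coordinates $p,q$.
   Context: $\Lambda$ is the algebra of symmetric functions over $\mathbb C$ with complete homogeneous $h_k$ and elementary $e_k$. For a sequence $a=(a_i)_{i\in\mathbb Z}$ define $h_{k;a}=\sum_{i=1}^k(-1)^{k-i}e_{k-i}(a_1,\dots,a_{k-1})h_i$ for $k\ge1$, $h_{0;a}=1$, $h_{k;a}=0$ for $k<0$; let $(\tau^ra)_i=a_{i+r}$; and set $s_{\mu;a}=\det[h_{\mu_i-i+j;\,\tau^{1-j}a}]_{i,j=1}^N$ for any $N\ge\ell(\mu)$. Frobenius notation: a Young diagram $\mu$ with $d$ diagonal boxes is written $(p_1,\dots,p_d\mid q_1,\dots,q_d)$ with $p_i=\mu_i-i$, $q_i=\mu'_i-i$, $\mu'$ the transposed diagram. *)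

theory Defs
  imports Complex_Main "HOL-Library.Poly_Mapping" "Jordan_Normal_Form.Determinant"
begin

(* Lambda over C, realised as the free polynomial ring C[h_1,h_2,...]
   (Lambda is freely generated by the complete homogeneous h_k, k>=1). *)
type_synonym sym_fun = "(nat \<Rightarrow>\<^sub>0 nat) \<Rightarrow>\<^sub>0 complex"

definition cst :: "complex \<Rightarrow> sym_fun" where
  "cst c = Poly_Mapping.single 0 c"

definition hh :: "nat \<Rightarrow> sym_fun" where
  "hh k = (if k = 0 then 1 else Poly_Mapping.single (Poly_Mapping.single k 1) 1)"

fun esym :: "nat \<Rightarrow> complex list \<Rightarrow> complex" where
  "esym 0 xs = 1"
| "esym (Suc k) [] = 0"
| "esym (Suc k) (x # xs) = esym (Suc k) xs + x * esym k xs"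

definition hka :: "int \<Rightarrow> (int \<Rightarrow> complex) \<Rightarrow> sym_fun" where
  "hka k a = (if k < 0 then 0 else if k = 0 then 1 else
     (\<Sum>i=1..nat k. cst ((-1) ^ (nat k - i) *
         esym (nat k - i) (map (\<lambda>j. a (int j)) [1..<nat k])) * hh i))"

definition tau :: "int \<Rightarrow> (int \<Rightarrow> complex) \<Rightarrow> int \<Rightarrow> complex" where
  "tau r a = (\<lambda>i. a (i + r))"

definition young :: "nat list \<Rightarrow> bool" where
  "young mu \<longleftrightarrow> sorted_wrt (\<ge>) mu \<and> (\<forall>x\<in>set mu. 0 < x)"

definition part :: "nat list \<Rightarrow> nat \<Rightarrow> nat" where
  "part mu i = (if 1 \<le> i \<and> i \<le> length mu then mu ! (i - 1) else 0)"

definition conj_part :: "nat list \<Rightarrow> nat \<Rightarrow> nat" where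
  "conj_part mu j = card {i. 1 \<le> i \<and> i \<le> length mu \<and> j \<le> part mu i}"

definition schur_a :: "nat list \<Rightarrow> (int \<Rightarrow> complex) \<Rightarrow> sym_fun" where
  "schur_a mu a = det (mat (length mu) (length mu)
     (\<lambda>(i, j). hka (int (part mu (i+1)) - int (i+1) + int (j+1)) (tau (1 - int (j+1)) a)))"

definition frob_d :: "nat list \<Rightarrow> nat" where
  "frob_d mu = card {i. 1 \<le> i \<and> i \<le> part mu i}"

definition frob_p :: "nat list \<Rightarrow> nat \<Rightarrow> nat" where
  "frob_p mu i = part mu i - i"

definition frob_q :: "nat list \<Rightarrow> nat \<Rightarrow> nat" where
  "frob_q mu i = conj_part mu i - i"

definition hook :: "nat \<Rightarrow> nat \<Rightarrow> nat list" where
  "hook p q = Suc p # replicate q 1"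

end

theory Submission
  imports Defs
begin


definition Zm :: "nat \<Rightarrow> nat \<Rightarrow> (nat \<Rightarrow> nat \<Rightarrow> 'a::comm_ring_1) \<Rightarrow> nat list \<Rightarrow> 'a mat" where
  "Zm n d f C = mat n n (\<lambda>(i,j). if i < d then f i j else if j = C!(i-d) then 1 else 0)"

lemma sum_single_nz:
  assumes "finite A" "j \<in> A" "\<And>i. i \<in> A \<Longrightarrow> i \<noteq> j \<Longrightarrow> h i = 0"
  shows "sum h A = h j"
  using assms by (metis sum.remove sum.neutral add_0_right DiffE singletonI)

lemma G_lemma:
  assumes "length K = d" "length C + d = n" "sorted_wrt (>) K" "sorted_wrt (<) C"
    "set K \<union> set C = {..<n}" "set K \<inter> set C = {}"
  shows "det (Zm n d f C) = det (mat d d (\<lambda>(i,j). (-1)^(K!j) * f i (K!j)))"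
  using assms
proof (induction n arbitrary: d f C K)
  case 0
  then show ?case by (simp add: Zm_def)
next
  case (Suc n)
  have dC: "distinct C" using Suc.prems(4) strict_sorted_iff by blast
  show ?case
  proof (cases "n \<in> set C")
    case True
    then obtain k where k: "k < length C" "C!k = n" by (metis in_set_conv_nth)
    have klast: "k = length C - 1"
    proof (rule ccontr)
      assume "k \<noteq> length C - 1"
      then have "Suc k < length C" using k by linarith
      then have "C!k < C!(Suc k)" using Suc.prems(4) by (simp add: sorted_wrt_iff_nth_less)
      moreover have "C!(Suc k) \<in> set C" using \<open>Suc k < length C\<close> by simp
      moreover have "C!(Suc k) \<in> {..<Suc n}" using Suc.prems(5) \<open>C!(Suc k) \<in> set C\<close> by blast
      ultimately show False using k by simp
    qed
    define C' where "C' = butlast C"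
    have Ceq: "C = C' @ [n]" unfolding C'_def using k klast
      by (metis append_butlast_last_id last_conv_nth length_greater_0_conv list.size(3) not_less0)
    have lenC': "length C' + d = n" using Suc.prems(2) Ceq by simp
    have nd: "n - d = length C'" using lenC' by simp
    have srt: "sorted_wrt (<) C'" using Suc.prems(4) Ceq by (simp add: sorted_wrt_append)
    have nC': "n \<notin> set C'" using dC Ceq by simp
    have nK: "n \<notin> set K" using Suc.prems(6) True by blast
    have un: "set K \<union> set C' = {..<n}"
    proof -
      have "set C = insert n (set C')" by (simp add: Ceq)
      then have "set K \<union> set C' = (set K \<union> set C) - {n}" using nC' nK by blast
      also have "\<dots> = {..<Suc n} - {n}" using Suc.prems(5) by simp
      also have "\<dots> = {..<n}" by auto
      finally show ?thesis .
    qed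
    have dj: "set K \<inter> set C' = {}" using Suc.prems(6) Ceq by (simp add: Int_Un_distrib)
    have IH: "det (Zm n d f C') = det (mat d d (\<lambda>(i,j). (-1)^(K!j) * f i (K!j)))"
      using Suc.IH[OF Suc.prems(1) lenC' Suc.prems(3) srt un dj] .
    have Zc: "Zm (Suc n) d f C \<in> carrier_mat (Suc n) (Suc n)" by (simp add: Zm_def)
    have "det (Zm (Suc n) d f C) = (\<Sum>j<Suc n. Zm (Suc n) d f C $$ (n,j) * cofactor (Zm (Suc n) d f C) n j)"
      by (rule laplace_expansion_row[OF Zc], simp)
    also have "\<dots> = Zm (Suc n) d f C $$ (n,n) * cofactor (Zm (Suc n) d f C) n n"
      apply (rule sum_single_nz) using lenC' Ceq by (auto simp: Zm_def nth_append)
    also have "\<dots> = det (mat_delete (Zm (Suc n) d f C) n n)"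
      using lenC' Ceq by (simp add: Zm_def nth_append cofactor_def nd)
    also have "mat_delete (Zm (Suc n) d f C) n n = Zm n d f C'"
      by (rule eq_matI, auto simp: mat_delete_def Zm_def Ceq nth_append lenC'[symmetric])
    finally show ?thesis using IH by simp
  next
    case False
    then have nK: "n \<in> set K" using Suc.prems(5) by auto
    then obtain k where k: "k < length K" "K!k = n" by (metis in_set_conv_nth)
    have k0: "k = 0"
    proof (rule ccontr)
      assume "k \<noteq> 0"
      then have "K!0 > K!k" using Suc.prems(3) k unfolding sorted_wrt_iff_nth_less by blast
      moreover have "K!0 \<in> set K" using k(1) by (cases K) auto
      moreover have "K!0 \<in> {..<Suc n}" using Suc.prems(5) \<open>K!0 \<in> set K\<close> by blast
      ultimately show False using k by simp
    qed
    obtain d' where d': "d = Suc d'" using k Suc.prems(1) by (cases d) auto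
    define K' where "K' = tl K"
    have Keq: "K = n # K'" unfolding K'_def using k k0 by (cases K) auto
    have lenK': "length K' = d'" using Suc.prems(1) Keq d' by simp
    have lenC: "length C + d' = n" using Suc.prems(2) d' by simp
    have srt: "sorted_wrt (>) K'" using Suc.prems(3) Keq by simp
    have nK': "n \<notin> set K'" using Suc.prems(3) Keq by auto
    have un: "set K' \<union> set C = {..<n}"
    proof -
      have "set K = insert n (set K')" by (simp add: Keq)
      then have "set K' \<union> set C = (set K \<union> set C) - {n}" using nK' False by blast
      also have "\<dots> = {..<Suc n} - {n}" using Suc.prems(5) by simp
      also have "\<dots> = {..<n}" by auto
      finally show ?thesis .
    qed
    have dj: "set K' \<inter> set C = {}" using Suc.prems(6) Keq by simp
    define sk where "sk = (\<lambda>i i'::nat. if i' < i then i' else Suc i')"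
    have IH: "\<And>i. det (Zm n d' (\<lambda>i' j. f (sk i i') j) C) =
        det (mat d' d' (\<lambda>(i',j). (-1)^(K'!j) * f (sk i i') (K'!j)))"
      using Suc.IH[OF lenK' lenC srt Suc.prems(4) un dj] .
    have Zc: "Zm (Suc n) d f C \<in> carrier_mat (Suc n) (Suc n)" by (simp add: Zm_def)
    have "det (Zm (Suc n) d f C) = (\<Sum>i<Suc n. Zm (Suc n) d f C $$ (i,n) * cofactor (Zm (Suc n) d f C) i n)"
      by (rule laplace_expansion_column[OF Zc], simp)
    also have "\<dots> = (\<Sum>i<d. Zm (Suc n) d f C $$ (i,n) * cofactor (Zm (Suc n) d f C) i n)"
    proof (rule sum.mono_neutral_right)
      show "\<forall>i\<in>{..<Suc n} - {..<d}. Zm (Suc n) d f C $$ (i, n) * cofactor (Zm (Suc n) d f C) i n = 0"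
      proof
        fix i assume i: "i \<in> {..<Suc n} - {..<d}"
        then have "i - d < length C" using Suc.prems(2) by auto
        then have "C!(i-d) \<noteq> n" using False nth_mem by metis
        then show "Zm (Suc n) d f C $$ (i, n) * cofactor (Zm (Suc n) d f C) i n = 0"
          using i by (simp add: Zm_def)
      qed
    qed (use Suc.prems(2) in auto)
    also have "\<dots> = (\<Sum>i<d. (-1)^(K!0) * f i (K!0) * cofactor (mat d d (\<lambda>(i,j). (-1)^(K!j) * f i (K!j))) i 0)"
    proof (rule sum.cong[OF refl])
      fix i assume i: "i \<in> {..<d}"
      have md: "mat_delete (Zm (Suc n) d f C) i n = Zm n d' (\<lambda>i' j. f (sk i i') j) C"
        apply (rule eq_matI)
        using i d' by (auto simp: mat_delete_def Zm_def sk_def)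
      have md2: "mat_delete (mat d d (\<lambda>(i,j). (-1)^(K!j) * f i (K!j))) i 0 =
          mat d' d' (\<lambda>(i',j). (-1)^(K'!j) * f (sk i i') (K'!j))"
        apply (rule eq_matI)
        using i d' by (auto simp: mat_delete_def sk_def Keq)
      have "Zm (Suc n) d f C $$ (i, n) = f i n" using i Suc.prems(2) by (simp add: Zm_def)
      then show "Zm (Suc n) d f C $$ (i, n) * cofactor (Zm (Suc n) d f C) i n =
         (-1)^(K!0) * f i (K!0) * cofactor (mat d d (\<lambda>(i,j). (-1)^(K!j) * f i (K!j))) i 0"
        unfolding cofactor_def md md2 IH using Keq by (simp add: power_add)
    qed
    also have "\<dots> = (\<Sum>i<d. mat d d (\<lambda>(i,j). (-1)^(K!j) * f i (K!j)) $$ (i,0) * cofactor (mat d d (\<lambda>(i,j). (-1)^(K!j) * f i (K!j))) i 0)"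
      by (intro sum.cong) (auto simp: d')
    also have "\<dots> = det (mat d d (\<lambda>(i,j). (-1)^(K!j) * f i (K!j)))"
      by (rule laplace_expansion_column[symmetric]) (auto simp: d')
    finally show ?thesis .
  qed
qed

function Fv :: "(nat \<Rightarrow> nat \<Rightarrow> 'a::comm_ring_1) \<Rightarrow> (nat \<Rightarrow> 'a) \<Rightarrow> nat \<Rightarrow> 'a" where
  "Fv t u k = u k - (\<Sum>l<k. Fv t u l * t l k)"
  by pat_completeness auto
termination by (relation "measure (\<lambda>(t,u,k). k)") auto

declare Fv.simps[simp del]

lemma Fv_sum:
  assumes t0: "\<And>l k. k < l \<Longrightarrow> t l k = 0" and t1: "\<And>l. t l l = 1" and kn: "k < n"
  shows "(\<Sum>l<n. Fv t u l * t l k) = u k"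
proof -
  have "(\<Sum>l<n. Fv t u l * t l k) = (\<Sum>l<Suc k. Fv t u l * t l k)"
    by (rule sum.mono_neutral_right) (use kn t0 in auto)
  also have "\<dots> = (\<Sum>l<k. Fv t u l * t l k) + Fv t u k" using t1 by simp
  also have "\<dots> = u k" by (subst (2) Fv.simps) simp
  finally show ?thesis .
qed

lemma factor_mat:
  assumes t0: "\<And>l k. k < l \<Longrightarrow> t l k = 0" and t1: "\<And>l. t l l = 1"
    and C: "\<forall>c\<in>set C. c < n" and len: "length C + d = n"
  shows "mat n n (\<lambda>(i,k). if i < d then u i k else t (C!(i-d)) k)
     = Zm n d (\<lambda>i. Fv t (u i)) C * mat n n (\<lambda>(l,k). t l k)"
proof (rule eq_matI)
  fix i k assume i: "i < dim_row (Zm n d (\<lambda>i. Fv t (u i)) C * mat n n (\<lambda>(l,k). t l k))"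
    and k: "k < dim_col (Zm n d (\<lambda>i. Fv t (u i)) C * mat n n (\<lambda>(l,k). t l k))"
  have i': "i < n" and k': "k < n" using i k by (auto simp: Zm_def)
  have "(Zm n d (\<lambda>i. Fv t (u i)) C * mat n n (\<lambda>(l,k). t l k)) $$ (i,k)
      = (\<Sum>l<n. Zm n d (\<lambda>i. Fv t (u i)) C $$ (i,l) * t l k)"
    using i' k' by (simp add: Zm_def scalar_prod_def lessThan_atLeast0)
  also have "\<dots> = (if i < d then u i k else t (C!(i-d)) k)"
  proof (cases "i < d")
    case True
    then show ?thesis using i' Fv_sum[where t=t and n=n and k=k, OF t0 t1 k'] by (simp add: Zm_def)
  next
    case False
    have cn: "C!(i-d) < n" using C len i' False by (simp add: nth_mem)
    have "(\<Sum>l<n. Zm n d (\<lambda>i. Fv t (u i)) C $$ (i,l) * t l k)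
        = (\<Sum>l<n. (if l = C!(i-d) then t l k else 0))"
      using i' False by (intro sum.cong) (auto simp: Zm_def)
    also have "\<dots> = t (C!(i-d)) k" using cn by simp
    finally show ?thesis using False by simp
  qed
  finally show "mat n n (\<lambda>(i,k). if i < d then u i k else t (C!(i-d)) k) $$ (i,k)
     = (Zm n d (\<lambda>i. Fv t (u i)) C * mat n n (\<lambda>(l,k). t l k)) $$ (i,k)"
    using i' k' by simp
qed (auto simp: Zm_def)

lemma det_factor:
  assumes t0: "\<And>l k. k < l \<Longrightarrow> t l k = 0" and t1: "\<And>l. t l l = 1"
    and C: "\<forall>c\<in>set C. c < n" and len: "length C + d = n"
  shows "det (mat n n (\<lambda>(i,k). if i < d then u i k else t (C!(i-d)) k))
     = det (Zm n d (\<lambda>i. Fv t (u i)) C)"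
proof -
  have ut: "upper_triangular (mat n n (\<lambda>(l,k). t l k))"
    by (auto simp: upper_triangular_def t0)
  have dT: "det (mat n n (\<lambda>(l,k). t l k)) = 1"
  proof -
    have "diag_mat (mat n n (\<lambda>(l,k). t l k)) = map (\<lambda>i. 1) [0..<n]"
      by (simp add: diag_mat_def t1)
    then show ?thesis
      by (subst det_upper_triangular[OF ut, of n]) (auto simp: map_replicate_const)
  qed
  have fm: "mat n n (\<lambda>(i,k). if i < d then u i k else t (C!(i-d)) k)
     = Zm n d (\<lambda>i. Fv t (u i)) C * mat n n (\<lambda>(l,k). t l k)"
    by (rule factor_mat[where t=t, OF t0 t1 C len])
  have dm: "det (Zm n d (\<lambda>i. Fv t (u i)) C * mat n n (\<lambda>(l,k). t l k))
     = det (Zm n d (\<lambda>i. Fv t (u i)) C) * det (mat n n (\<lambda>(l,k). t l k))"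
    by (rule det_mult[of _ n]) (auto simp: Zm_def)
  have "det (mat n n (\<lambda>(i,k). if i < d then u i k else t (C!(i-d)) k))
     = det (Zm n d (\<lambda>i. Fv t (u i)) C * mat n n (\<lambda>(l,k). t l k))"
    by (rule arg_cong[where f=det, OF fm])
  also have "\<dots> = det (Zm n d (\<lambda>i. Fv t (u i)) C) * det (mat n n (\<lambda>(l,k). t l k))"
    by (rule dm)
  also have "\<dots> = det (Zm n d (\<lambda>i. Fv t (u i)) C)" unfolding dT by (rule mult_1_right)
  finally show ?thesis .
qed



lemma down_closed_eq:
  assumes fin: "finite S" and pos: "\<And>i. i \<in> S \<Longrightarrow> 1 \<le> i"
    and dc: "\<And>i j. i \<in> S \<Longrightarrow> 1 \<le> j \<Longrightarrow> j \<le> i \<Longrightarrow> j \<in> S"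
  shows "S = {1..card S}"
proof (cases "S = {}")
  case True then show ?thesis by simp
next
  case False
  define m where "m = Max S"
  have mS: "m \<in> S" using fin False by (simp add: m_def)
  have "S = {1..m}"
  proof
    show "S \<subseteq> {1..m}" using pos fin m_def by auto
    show "{1..m} \<subseteq> S" using dc mS by auto
  qed
  then show ?thesis by simp
qed

locale yd =
  fixes mu :: "nat list"
  assumes yg: "young mu"
begin

abbreviation "N \<equiv> length mu"
abbreviation "lam \<equiv> part mu"
abbreviation "lamc \<equiv> conj_part mu"
abbreviation "d \<equiv> frob_d mu"


lemma part_zero: "N < r \<Longrightarrow> lam r = 0"
  unfolding part_def by simp

lemma part_mono: assumes "1 \<le> r" "r \<le> r'" shows "lam r' \<le> lam r"
proof (cases "r' \<le> N")
  case True
  have s: "sorted_wrt (\<ge>) mu" using yg unfolding young_def by simp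
  show ?thesis
  proof (cases "r = r'")
    case False
    then have "r - 1 < r' - 1" "r' - 1 < N" using assms True by auto
    then have "mu ! (r' - 1) \<le> mu ! (r - 1)" using s unfolding sorted_wrt_iff_nth_less by blast
    then show ?thesis using assms True unfolding part_def by auto
  qed simp
next
  case False then show ?thesis by (simp add: part_zero)
qed

lemma part_ge_imp_le_N: "1 \<le> j \<Longrightarrow> j \<le> lam i \<Longrightarrow> i \<le> N"
  using part_zero by (metis le_zero_eq not_le not_one_le_zero)

lemma conj_set_eq: assumes "1 \<le> j"
  shows "{i. 1 \<le> i \<and> i \<le> N \<and> j \<le> lam i} = {1..lamc j}"
proof -
  have "{i. 1 \<le> i \<and> i \<le> N \<and> j \<le> lam i} = {1..card {i. 1 \<le> i \<and> i \<le> N \<and> j \<le> lam i}}"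
  proof (rule down_closed_eq)
    show "finite {i. 1 \<le> i \<and> i \<le> N \<and> j \<le> lam i}" by (rule finite_subset[of _ "{..N}"]) auto
  next
    fix i k assume "i \<in> {i. 1 \<le> i \<and> i \<le> N \<and> j \<le> lam i}" "1 \<le> k" "k \<le> i"
    then show "k \<in> {i. 1 \<le> i \<and> i \<le> N \<and> j \<le> lam i}"
      using part_mono[of k i] by auto
  qed auto
  then show ?thesis unfolding conj_part_def .
qed

lemma conj_iff: assumes "1 \<le> i" "1 \<le> j" shows "i \<le> lamc j \<longleftrightarrow> j \<le> lam i"
proof -
  have "i \<le> lamc j \<longleftrightarrow> i \<in> {1..lamc j}" using assms by auto
  also have "\<dots> \<longleftrightarrow> i \<le> N \<and> j \<le> lam i" using conj_set_eq[OF assms(2)] assms by blast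
  also have "\<dots> \<longleftrightarrow> j \<le> lam i" using part_ge_imp_le_N assms by blast
  finally show ?thesis .
qed

lemma conj_le_N: "lamc j \<le> N"
proof -
  have "lamc j \<le> card {1..N}" unfolding conj_part_def by (rule card_mono) auto
  then show ?thesis by simp
qed

lemma d_set_eq: "{i. 1 \<le> i \<and> i \<le> lam i} = {1..d}"
proof -
  have "{i. 1 \<le> i \<and> i \<le> lam i} = {1..card {i. 1 \<le> i \<and> i \<le> lam i}}"
  proof (rule down_closed_eq)
    show "finite {i. 1 \<le> i \<and> i \<le> lam i}"
      by (rule finite_subset[of _ "{..N}"]) (auto intro: part_ge_imp_le_N)
  next
    fix i k assume "i \<in> {i. 1 \<le> i \<and> i \<le> lam i}" "1 \<le> k" "k \<le> i"
    then show "k \<in> {i. 1 \<le> i \<and> i \<le> lam i}" using part_mono[of k i] by auto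
  qed auto
  then show ?thesis unfolding frob_d_def .
qed

lemma d_iff: "1 \<le> r \<Longrightarrow> r \<le> d \<longleftrightarrow> r \<le> lam r"
  using d_set_eq by (metis (no_types, lifting) atLeastAtMost_iff mem_Collect_eq)

lemma d_iff_conj: "1 \<le> j \<Longrightarrow> j \<le> d \<longleftrightarrow> j \<le> lamc j"
  using d_iff conj_iff by blast

lemma d_le_N: "d \<le> N"
proof (cases "d = 0")
  case False
  then have "d \<le> lam d" using d_iff[of d] by simp
  then show ?thesis using part_ge_imp_le_N[of d d] False by simp
qed simp

lemma conj_mono: assumes "1 \<le> j" "j \<le> j'" shows "lamc j' \<le> lamc j"
proof (cases "lamc j' = 0")
  case False
  have "j' \<le> lam (lamc j')" using conj_iff[of "lamc j'" j'] False assms by simp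
  then have "j \<le> lam (lamc j')" using assms by simp
  then show ?thesis using conj_iff[of "lamc j'" j] False assms by simp
qed simp

definition "KK = map (\<lambda>j. frob_q mu (j+1)) [0..<d]"
definition "CC = map (\<lambda>i. i - lam (i+1)) [d..<N]"

lemma KK_nth: "j < d \<Longrightarrow> KK ! j = lamc (j+1) - (j+1)"
  unfolding KK_def frob_q_def by simp

lemma CC_nth: "i < N - d \<Longrightarrow> CC ! i = (d+i) - lam (d+i+1)"
  unfolding CC_def by simp

lemma lam_low: "d \<le> i \<Longrightarrow> lam (i+1) \<le> i"
  using d_iff[of "i+1"] by simp

lemma conj_high: "j < d \<Longrightarrow> j + 1 \<le> lamc (j+1)"
  using d_iff_conj[of "j+1"] by simp

lemma KK_sorted: "sorted_wrt (>) KK"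
  unfolding sorted_wrt_iff_nth_less
proof (intro allI impI)
  fix i j assume ij: "i < j" "j < length KK"
  then have jd: "j < d" by (simp add: KK_def)
  have "lamc (j+1) \<le> lamc (i+1)" using conj_mono[of "i+1" "j+1"] ij by simp
  moreover have "j + 1 \<le> lamc (j+1)" "i+1 \<le> lamc (i+1)" using conj_high jd ij by auto
  ultimately show "KK ! j < KK ! i" using KK_nth[of i] KK_nth[of j] jd ij by simp
qed

lemma CC_sorted: "sorted_wrt (<) CC"
  unfolding sorted_wrt_iff_nth_less
proof (intro allI impI)
  fix i j assume ij: "i < j" "j < length CC"
  then have jd: "j < N - d" by (simp add: CC_def)
  have "lam (d+j+1) \<le> lam (d+i+1)" using part_mono[of "d+i+1" "d+j+1"] ij by simp
  moreover have "lam (d+j+1) \<le> d+j" "lam (d+i+1) \<le> d+i" using lam_low[of "d+j"] lam_low[of "d+i"] by auto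
  ultimately show "CC ! i < CC ! j" using CC_nth[of i] CC_nth[of j] jd ij by simp
qed

lemma len_KK: "length KK = d" by (simp add: KK_def)
lemma len_CC: "length CC + d = N" using d_le_N by (simp add: CC_def)

lemma KK_CC_disj: "set KK \<inter> set CC = {}"
proof (rule ccontr)
  assume "set KK \<inter> set CC \<noteq> {}"
  then obtain j i where j: "j < d" and i: "i < N - d" and eq: "KK ! j = CC ! i"
    by (metis disjoint_iff in_set_conv_nth len_KK len_CC add_diff_cancel_right')
  define I where "I = d + i + 1"
  define J where "J = j + 1"
  have e: "lamc J - J = (I - 1) - lam I" using eq KK_nth[OF j] CC_nth[OF i] by (simp add: I_def J_def)
  have hJ: "J \<le> lamc J" using conj_high[OF j] by (simp add: J_def)
  have hI: "lam I \<le> I - 1" using lam_low[of "d+i"] by (simp add: I_def)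
  have JI: "J \<le> d" "d < I" using j by (auto simp: J_def I_def)
  show False
  proof (cases "J \<le> lam I")
    case True
    then have "I \<le> lamc J" using conj_iff[of I J] by (simp add: I_def J_def)
    then show False using e hJ hI True JI by linarith
  next
    case False
    then have "\<not> I \<le> lamc J" using conj_iff[of I J] by (simp add: I_def J_def)
    then show False using e hJ hI False JI by linarith
  qed
qed

lemma KK_CC_union: "set KK \<union> set CC = {..<N}"
proof (rule card_subset_eq)
  show "finite {..<N}" by simp
  show "set KK \<union> set CC \<subseteq> {..<N}"
  proof
    fix x assume "x \<in> set KK \<union> set CC"
    then show "x \<in> {..<N}"
    proof
      assume "x \<in> set KK"
      then obtain j where j: "j < d" "x = KK ! j" by (metis in_set_conv_nth len_KK)
      have "lamc (j+1) \<le> N" by (rule conj_le_N)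
      then show ?thesis using j KK_nth[of j] conj_high[of j] by simp
    next
      assume "x \<in> set CC"
      then obtain i where i: "i < N - d" "x = CC ! i"
        by (metis in_set_conv_nth len_CC add_diff_cancel_right')
      then show ?thesis using CC_nth[of i] by simp
    qed
  qed
  have "sorted_wrt (<) (rev KK)" using KK_sorted by (simp add: sorted_wrt_rev)
  then have "distinct KK" by (simp add: strict_sorted_iff)
  moreover have "distinct CC" using CC_sorted by (simp add: strict_sorted_iff)
  ultimately have "card (set KK \<union> set CC) = d + (N - d)"
    using KK_CC_disj len_KK len_CC by (simp add: card_Un_disjoint distinct_card)
  then show "card (set KK \<union> set CC) = card {..<N}" using d_le_N by simp
qed

end

definition tt :: "(int \<Rightarrow> complex) \<Rightarrow> nat \<Rightarrow> nat \<Rightarrow> sym_fun" where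
  "tt a l k = hka (int k - int l) (tau (1 - int (k+1)) a)"

definition uu :: "(int \<Rightarrow> complex) \<Rightarrow> nat \<Rightarrow> nat \<Rightarrow> sym_fun" where
  "uu a p k = hka (int p + int (k+1)) (tau (1 - int (k+1)) a)"

lemma tt0: "k < l \<Longrightarrow> tt a l k = 0"
  unfolding tt_def hka_def by simp

lemma tt1: "tt a l l = 1"
  unfolding tt_def hka_def by simp

lemma hook_len: "length (hook p q) = Suc q" by (simp add: hook_def)

lemma hook_part1: "part (hook p q) (Suc 0) = Suc p" by (simp add: hook_def part_def)

lemma hook_partr: "1 \<le> r \<Longrightarrow> r \<le> q \<Longrightarrow> part (hook p q) (Suc r) = 1"
  by (simp add: hook_def part_def)

lemma hook_lemma: "schur_a (hook p q) a = (-1)^q * Fv (tt a) (uu a p) q"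
proof -
  have "schur_a (hook p q) a =
      det (mat (Suc q) (Suc q) (\<lambda>(i,k). if i < 1 then (\<lambda>i. uu a p) i k else tt a ([0..<q]!(i-1)) k))"
    unfolding schur_a_def hook_len
  proof (intro arg_cong[where f=det] eq_matI)
    fix i k assume i: "i < dim_row (mat (Suc q) (Suc q) (\<lambda>(i,k). if i < 1 then (\<lambda>i. uu a p) i k else tt a ([0..<q]!(i-1)) k))"
      and k: "k < dim_col (mat (Suc q) (Suc q) (\<lambda>(i,k). if i < 1 then (\<lambda>i. uu a p) i k else tt a ([0..<q]!(i-1)) k))"
    have i': "i < Suc q" and k': "k < Suc q" using i k by auto
    show "mat (Suc q) (Suc q) (\<lambda>(i, j). hka (int (part (hook p q) (i + 1)) - int (i + 1) + int (j + 1)) (tau (1 - int (j + 1)) a)) $$ (i, k) =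
          mat (Suc q) (Suc q) (\<lambda>(i,k). if i < 1 then (\<lambda>i. uu a p) i k else tt a ([0..<q]!(i-1)) k) $$ (i, k)"
    proof (cases "i = 0")
      case True
      have "mat (Suc q) (Suc q) (\<lambda>(i, j). hka (int (part (hook p q) (i + 1)) - int (i + 1) + int (j + 1)) (tau (1 - int (j + 1)) a)) $$ (i, k)
          = hka (int (part (hook p q) (0 + 1)) - int (0 + 1) + int (k + 1)) (tau (1 - int (k + 1)) a)"
        using True k' by simp
      also have "\<dots> = uu a p k" by (simp add: hook_part1 uu_def)
      also have "\<dots> = mat (Suc q) (Suc q) (\<lambda>(i,k). if i < 1 then (\<lambda>i. uu a p) i k else tt a ([0..<q]!(i-1)) k) $$ (i, k)"
        using True k' by simp
      finally show ?thesis .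
    next
      case False
      then obtain r where r: "i = Suc r" by (cases i) auto
      have pp: "part (hook p q) (i+1) = 1" using hook_partr[of "i" q p] r i' by simp
      have e: "int (part (hook p q) (i + 1)) - int (i + 1) + int (k + 1) = int k - int r"
        using pp by (simp add: r)
      have ri: "[0..<q]!(i-1) = r" using r i' by simp
      have "mat (Suc q) (Suc q) (\<lambda>(i, j). hka (int (part (hook p q) (i + 1)) - int (i + 1) + int (j + 1)) (tau (1 - int (j + 1)) a)) $$ (i, k)
          = hka (int (part (hook p q) (i + 1)) - int (i + 1) + int (k + 1)) (tau (1 - int (k + 1)) a)"
        using i' k' by simp
      also have "\<dots> = hka (int k - int r) (tau (1 - int (k + 1)) a)" by (simp only: e)
      also have "\<dots> = tt a ([0..<q]!(i-1)) k" unfolding ri tt_def ..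
      also have "\<dots> = mat (Suc q) (Suc q) (\<lambda>(i,k). if i < 1 then (\<lambda>i. uu a p) i k else tt a ([0..<q]!(i-1)) k) $$ (i, k)"
        using False i' k' by simp
      finally show ?thesis .
    qed
  qed auto
  also have "\<dots> = det (Zm (Suc q) 1 (\<lambda>i. Fv (tt a) ((\<lambda>i. uu a p) i)) [0..<q])"
    by (rule det_factor[where t="tt a" and d=1 and C="[0..<q]" and n="Suc q"]) (simp_all add: tt0 tt1)
  also have "\<dots> = det (mat 1 1 (\<lambda>(i,j). (-1)^([q]!j) * Fv (tt a) (uu a p) ([q]!j)))"
    by (rule G_lemma[where K="[q]" and C="[0..<q]"]) auto
  also have "\<dots> = (-1)^q * Fv (tt a) (uu a p) q"
    by (subst det_single) auto
  finally show ?thesis .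
qed

theorem theorem5:
  fixes a :: "int \<Rightarrow> complex" and mu :: "nat list"
  assumes "young mu"
  shows "schur_a mu a =
    det (mat (frob_d mu) (frob_d mu)
      (\<lambda>(i, j). schur_a (hook (frob_p mu (i+1)) (frob_q mu (j+1))) a))"
proof -
  interpret yd mu by (rule yd.intro) (rule assms)
  have CCb: "\<forall>c\<in>set CC. c < N" using KK_CC_union by auto
  have "schur_a mu a =
     det (mat N N (\<lambda>(i,k). if i < d then uu a (frob_p mu (i+1)) k else tt a (CC!(i-d)) k))"
    unfolding schur_a_def
  proof (intro arg_cong[where f=det] eq_matI)
    fix i k assume i: "i < dim_row (mat N N (\<lambda>(i,k). if i < d then uu a (frob_p mu (i+1)) k else tt a (CC!(i-d)) k))"
      and k: "k < dim_col (mat N N (\<lambda>(i,k). if i < d then uu a (frob_p mu (i+1)) k else tt a (CC!(i-d)) k))"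
    have i': "i < N" and k': "k < N" using i k by auto
    show "mat N N (\<lambda>(i, j). hka (int (lam (i + 1)) - int (i + 1) + int (j + 1)) (tau (1 - int (j + 1)) a)) $$ (i, k) =
          mat N N (\<lambda>(i,k). if i < d then uu a (frob_p mu (i+1)) k else tt a (CC!(i-d)) k) $$ (i, k)"
    proof (cases "i < d")
      case True
      have h: "i + 1 \<le> lam (i+1)" using d_iff[of "i+1"] True by simp
      have e: "int (lam (i+1)) - int (i+1) + int (k+1) = int (frob_p mu (i+1)) + int (k+1)"
        using h by (simp add: frob_p_def of_nat_diff)
      have "mat N N (\<lambda>(i, j). hka (int (lam (i + 1)) - int (i + 1) + int (j + 1)) (tau (1 - int (j + 1)) a)) $$ (i, k) = hka (int (lam (i + 1)) - int (i + 1) + int (k + 1)) (tau (1 - int (k + 1)) a)"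
        using i' k' by simp
      also have "\<dots> = hka (int (frob_p mu (i+1)) + int (k+1)) (tau (1 - int (k + 1)) a)" by (simp only: e)
      also have "\<dots> = uu a (frob_p mu (i+1)) k" by (simp only: uu_def)
      also have "\<dots> = mat N N (\<lambda>(i,k). if i < d then uu a (frob_p mu (i+1)) k else tt a (CC!(i-d)) k) $$ (i, k)" using True i' k' by simp
      finally show ?thesis .
    next
      case False
      have l: "lam (i+1) \<le> i" using lam_low[of i] False by simp
      have c: "CC ! (i-d) = i - lam (i+1)" using CC_nth[of "i-d"] False i' by simp
      have e: "int (lam (i+1)) - int (i+1) + int (k+1) = int k - int (i - lam (i+1))"
        using l by (simp add: of_nat_diff)
      have "mat N N (\<lambda>(i, j). hka (int (lam (i + 1)) - int (i + 1) + int (j + 1)) (tau (1 - int (j + 1)) a)) $$ (i, k) = hka (int (lam (i + 1)) - int (i + 1) + int (k + 1)) (tau (1 - int (k + 1)) a)"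
        using i' k' by simp
      also have "\<dots> = hka (int k - int (i - lam (i+1))) (tau (1 - int (k + 1)) a)" by (simp only: e)
      also have "\<dots> = tt a (CC!(i-d)) k" unfolding c tt_def ..
      also have "\<dots> = mat N N (\<lambda>(i,k). if i < d then uu a (frob_p mu (i+1)) k else tt a (CC!(i-d)) k) $$ (i, k)" using False i' k' by simp
      finally show ?thesis .
    qed
  qed auto
  also have "\<dots> = det (Zm N d (\<lambda>i. Fv (tt a) (uu a (frob_p mu (i+1)))) CC)"
    by (rule det_factor[where t="tt a"]) (simp_all add: tt0 tt1 CCb len_CC)
  also have "\<dots> = det (mat d d (\<lambda>(i,j). (-1)^(KK!j) * Fv (tt a) (uu a (frob_p mu (i+1))) (KK!j)))"
    by (rule G_lemma[OF len_KK len_CC KK_sorted CC_sorted KK_CC_union KK_CC_disj])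
  also have "\<dots> = det (mat d d (\<lambda>(i, j). schur_a (hook (frob_p mu (i+1)) (frob_q mu (j+1))) a))"
  proof (intro arg_cong[where f=det] eq_matI)
    fix i j assume i: "i < dim_row (mat d d (\<lambda>(i, j). schur_a (hook (frob_p mu (i+1)) (frob_q mu (j+1))) a))"
      and j: "j < dim_col (mat d d (\<lambda>(i, j). schur_a (hook (frob_p mu (i+1)) (frob_q mu (j+1))) a))"
    have i': "i < d" and j': "j < d" using i j by auto
    have kj: "KK ! j = frob_q mu (j+1)" using j' by (simp add: KK_def)
    show "mat d d (\<lambda>(i,j). (-1)^(KK!j) * Fv (tt a) (uu a (frob_p mu (i+1))) (KK!j)) $$ (i, j) =
          mat d d (\<lambda>(i, j). schur_a (hook (frob_p mu (i+1)) (frob_q mu (j+1))) a) $$ (i, j)"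
      using i' j' by (simp add: kj hook_lemma)
  qed simp_all
  finally show ?thesis .
qed

end
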